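(* Assume $\overline u>0$ and that $\Theta$ contains at least two points. For $x,y\in\mathbb{Z}^d$ define $\alpha^{x,y}(k)=\frac12\bigl(e^{-c|k-x|_1}+e^{-c|k-y|_1}\bigr)$ with $c=\frac1n\ln\bigl(1+\frac{\overline u}{2\|u\|_{\ell^1}}\bigr)$, $n=\max_{i,j\in\Theta}|i-j|_1$, and $W^{x,y}(k)=\sum_{j\in\mathbb{Z}^d}\alpha^{x,y}(j)u(k-j)$. Then for all $x,y,k\in\mathbb{Z}^d$, \[ W^{x,y}(k)\ge\alpha^{x,y}(k)\frac{\overline u}{2}>0, \] and in particular $W^{x,y}(k)\ge\overline u/4$ for $k\in\{x,y\}$.
   Context: $d\ge1$; $|x|_1=\sum_i|x_i|$. $u:\mathbb{Z}^d\to\mathbb{R}$ has finite nonempty support $\Theta$ with $0\in\Theta$; $\overline u=\sum_ku(k)$, $\|u\|_{\ell^1}=\sum_k|u(k)|$. *)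

theory Defs
  imports "HOL-Analysis.Analysis"
begin

definition l1 :: "int ^ 'd::finite \<Rightarrow> int" where
  "l1 x = (\<Sum>i\<in>UNIV. \<bar>x $ i\<bar>)"

definition supp :: "(int ^ 'd::finite \<Rightarrow> real) \<Rightarrow> (int ^ 'd) set" where
  "supp u = {k. u k \<noteq> 0}"

definition ubar :: "(int ^ 'd::finite \<Rightarrow> real) \<Rightarrow> real" where
  "ubar u = (\<Sum>k\<in>supp u. u k)"

definition ul1 :: "(int ^ 'd::finite \<Rightarrow> real) \<Rightarrow> real" where
  "ul1 u = (\<Sum>k\<in>supp u. \<bar>u k\<bar>)"

definition diam_n :: "(int ^ 'd::finite \<Rightarrow> real) \<Rightarrow> int" where
  "diam_n u = Max {l1 (i - j) | i j. i \<in> supp u \<and> j \<in> supp u}"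

definition cconst :: "(int ^ 'd::finite \<Rightarrow> real) \<Rightarrow> real" where
  "cconst u = ln (1 + ubar u / (2 * ul1 u)) / real_of_int (diam_n u)"

definition alpha :: "(int ^ 'd::finite \<Rightarrow> real) \<Rightarrow> int ^ 'd \<Rightarrow> int ^ 'd \<Rightarrow> int ^ 'd \<Rightarrow> real" where
  "alpha u x y k = (exp (- cconst u * l1 (k - x)) + exp (- cconst u * l1 (k - y))) / 2"

definition W :: "(int ^ 'd::finite \<Rightarrow> real) \<Rightarrow> int ^ 'd \<Rightarrow> int ^ 'd \<Rightarrow> int ^ 'd \<Rightarrow> real" where
  "W u x y k = (\<Sum>\<^sub>\<infinity>j\<in>UNIV. alpha u x y j * u (k - j))"

end

theory Submission
  imports Defs
begin

lemma l1_nonneg: "l1 a \<ge> 0"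
  unfolding l1_def by (simp add: sum_nonneg)

lemma l1_zero[simp]: "l1 0 = 0"
  unfolding l1_def by simp

lemma l1_diff_bound: "\<bar>l1 (a - m) - l1 a\<bar> \<le> l1 m"
proof -
  have 1: "l1 (a - m) \<le> l1 a + l1 m"
    unfolding l1_def sum.distrib[symmetric] by (rule sum_mono) auto
  have 2: "l1 a \<le> l1 (a - m) + l1 m"
    unfolding l1_def sum.distrib[symmetric] by (rule sum_mono) auto
  show ?thesis using 1 2 by linarith
qed

lemma W_finite:
  assumes fin: "finite (supp u)"
  shows "W u x y k = (\<Sum>m\<in>supp u. alpha u x y (k - m) * u m)"
proof -
  have bij: "bij_betw (\<lambda>m. k - m) UNIV (UNIV :: (int^'a) set)"
    by (rule bij_betwI[where g="\<lambda>m. k - m"]) auto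
  have "W u x y k = (\<Sum>\<^sub>\<infinity>m\<in>UNIV. alpha u x y (k - m) * u (k - (k - m)))"
    unfolding W_def by (rule infsum_reindex_bij_betw[symmetric, OF bij])
  also have "\<dots> = (\<Sum>\<^sub>\<infinity>m\<in>supp u. alpha u x y (k - m) * u m)"
    by (rule infsum_cong_neutral) (auto simp: supp_def)
  also have "\<dots> = (\<Sum>m\<in>supp u. alpha u x y (k - m) * u m)"
    using fin by simp
  finally show ?thesis .
qed

lemma exp_bound:
  fixes c n :: real and a b :: int
  assumes "c \<ge> 0" "real_of_int \<bar>a - b\<bar> \<le> n"
  shows "\<bar>exp (- c * a) - exp (- c * b)\<bar> \<le> exp (- c * b) * (exp (c * n) - 1)"
proof -
  have h1: "- c * a \<le> - c * b + c * n"
  proof -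
    have "real_of_int b - a \<le> n" using assms(2) by linarith
    hence "c * (real_of_int b - a) \<le> c * n" using assms(1) by (simp add: mult_left_mono)
    thus ?thesis by (simp add: algebra_simps)
  qed
  have h2: "- c * b - c * n \<le> - c * a"
  proof -
    have "real_of_int a - b \<le> n" using assms(2) by linarith
    hence "c * (real_of_int a - b) \<le> c * n" using assms(1) by (simp add: mult_left_mono)
    thus ?thesis by (simp add: algebra_simps)
  qed
  have e1: "exp (- c * a) \<le> exp (- c * b) * exp (c * n)"
    using h1 by (simp add: exp_add[symmetric])
  have e2: "exp (- c * b) * exp (- c * n) \<le> exp (- c * a)"
  proof -
    have "exp (- c * b) * exp (- c * n) = exp (- c * b - c * n)" by (simp add: mult_exp_exp)
    thus ?thesis using h2 by simp
  qed
  have t: "1 - exp (- c * n) \<le> exp (c * n) - 1"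
  proof -
    have "exp (c*n) + exp (-(c*n)) \<ge> 2"
    proof -
      have p: "exp (c*n) > 0" by simp
      have "exp (-(c*n)) = 1 / exp (c*n)" by (simp add: exp_minus field_simps)
      moreover have "exp (c*n) + 1/exp (c*n) \<ge> 2"
      proof -
        have "(exp (c*n) - 1)^2 \<ge> 0" by simp
        hence "exp (c*n) * exp (c*n) + 1 \<ge> 2 * exp (c*n)" by (simp add: power2_eq_square algebra_simps)
        thus ?thesis using p by (simp add: field_simps)
      qed
      ultimately show ?thesis by simp
    qed
    thus ?thesis by simp
  qed
  have pb: "exp (- c * b) > 0" by simp
  have "exp (- c * b) * (1 - exp (- c * n)) \<le> exp (- c * b) * (exp (c * n) - 1)"
    using t pb by (simp add: mult_left_mono)
  thus ?thesis using e1 e2 by (auto simp: abs_le_iff algebra_simps)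
qed

theorem lemmaA4:
  fixes u :: "int ^ 'd::finite \<Rightarrow> real" and x y k :: "int ^ 'd"
  assumes "finite (supp u)" and "0 \<in> supp u"
    and "\<exists>a\<in>supp u. \<exists>b\<in>supp u. a \<noteq> b"
    and "ubar u > 0"
  shows "W u x y k \<ge> alpha u x y k * ubar u / 2 \<and> alpha u x y k * ubar u / 2 > 0
    \<and> W u x y x \<ge> ubar u / 4 \<and> W u x y y \<ge> ubar u / 4"
proof -
  note fin = assms(1)
  define S where "S = supp u"
  define n where "n = diam_n u"
  define c where "c = cconst u"
  define N where "N = ul1 u"
  define ub where "ub = ubar u"
  have ub_pos: "ub > 0" using assms(4) ub_def by simp
  have Nge: "ub \<le> N" unfolding ub_def N_def ubar_def ul1_def by (rule sum_mono) auto
  have Npos: "N > 0" using Nge ub_pos by linarith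
  define Dset where "Dset = {l1 (i - j) | i j. i \<in> supp u \<and> j \<in> supp u}"
  have Dfin: "finite Dset"
  proof -
    have "Dset = (\<lambda>(i,j). l1 (i - j)) ` (supp u \<times> supp u)" unfolding Dset_def by auto
    thus ?thesis using fin by simp
  qed
  have n_eq: "n = Max Dset" unfolding n_def diam_n_def Dset_def by simp
  have lm: "l1 m \<le> n" if "m \<in> supp u" for m
  proof -
    have "l1 (m - 0) \<in> Dset" unfolding Dset_def using that assms(2) by blast
    thus ?thesis using n_eq Dfin by simp
  qed
  obtain a b where ab: "a \<in> supp u" "b \<in> supp u" "a \<noteq> b" using assms(3) by blast
  have "l1 (a - b) > 0"
  proof -
    obtain i where "(a - b) $ i \<noteq> 0" using ab(3)
      by (metis right_minus_eq vec_eq_iff zero_index)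
    hence "\<bar>(a - b) $ i\<bar> > 0" by simp
    moreover have "\<bar>(a - b) $ i\<bar> \<le> l1 (a - b)" unfolding l1_def
      by (rule member_le_sum) auto
    ultimately show ?thesis by linarith
  qed
  moreover have "l1 (a - b) \<le> n" unfolding n_eq using Dfin ab by (intro Max_ge) (auto simp: Dset_def)
  ultimately have npos: "n > 0" by linarith
  define E where "E = ub / (2 * N)"
  have Epos: "E > 0" using ub_pos Npos E_def by simp
  have cn: "c * n = ln (1 + E)"
    using npos unfolding c_def cconst_def E_def ub_def N_def n_def by simp
  have expcn: "exp (c * n) - 1 = E" using cn Epos by simp
  have c_nonneg: "c \<ge> 0"
  proof -
    have "ln (1 + E) \<ge> 0" using Epos by simp
    thus ?thesis unfolding c_def cconst_def using npos
      by (simp add: E_def ub_def N_def n_def)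
  qed
  have key: "W u x y z \<ge> alpha u x y z * ub / 2" for z
  proof -
    have bnd: "\<bar>alpha u x y (z - m) - alpha u x y z\<bar> \<le> alpha u x y z * E" if m: "m \<in> supp u" for m
    proof -
      have lmn: "l1 m \<le> n" using lm m by simp
      have zz: "z - m - x = z - x - m" "z - m - y = z - y - m" by (simp_all add: algebra_simps)
      have b1: "\<bar>exp (- c * l1 (z - m - x)) - exp (- c * l1 (z - x))\<bar> \<le> exp (- c * l1 (z - x)) * E"
      proof -
        have "\<bar>l1 (z - x - m) - l1 (z - x)\<bar> \<le> n" using l1_diff_bound[of "z - x" m] lmn by linarith
        hence "real_of_int \<bar>l1 (z - x - m) - l1 (z - x)\<bar> \<le> real_of_int n" by linarith
        from exp_bound[OF c_nonneg this] expcn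
        have "\<bar>exp (- c * l1 (z - x - m)) - exp (- c * l1 (z - x))\<bar> \<le> exp (- c * l1 (z - x)) * E" by simp
        thus ?thesis unfolding zz .
      qed
      have b2: "\<bar>exp (- c * l1 (z - m - y)) - exp (- c * l1 (z - y))\<bar> \<le> exp (- c * l1 (z - y)) * E"
      proof -
        have "\<bar>l1 (z - y - m) - l1 (z - y)\<bar> \<le> n" using l1_diff_bound[of "z - y" m] lmn by linarith
        hence "real_of_int \<bar>l1 (z - y - m) - l1 (z - y)\<bar> \<le> real_of_int n" by linarith
        from exp_bound[OF c_nonneg this] expcn
        have "\<bar>exp (- c * l1 (z - y - m)) - exp (- c * l1 (z - y))\<bar> \<le> exp (- c * l1 (z - y)) * E" by simp
        thus ?thesis unfolding zz .
      qed
      have gen: "\<bar>(a1 + b1) / 2 - (a0 + b0) / 2\<bar> \<le> (a0 + b0) / 2 * E"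
        if "\<bar>a1 - a0\<bar> \<le> a0 * E" "\<bar>b1 - b0\<bar> \<le> b0 * E" for a1 a0 b1 b0 :: real
        using that by (auto simp: abs_le_iff field_simps)
      show ?thesis unfolding alpha_def c_def[symmetric] by (rule gen[OF b1 b2])
    qed
    have "W u x y z - alpha u x y z * ub = (\<Sum>m\<in>supp u. (alpha u x y (z - m) - alpha u x y z) * u m)"
      unfolding W_finite[OF fin] ub_def ubar_def
      by (simp add: sum_subtractf sum_distrib_left sum_distrib_right algebra_simps)
    also have "\<dots> \<ge> - (\<Sum>m\<in>supp u. alpha u x y z * E * \<bar>u m\<bar>)"
    proof -
      have "(\<Sum>m\<in>supp u. - (alpha u x y z * E * \<bar>u m\<bar>)) \<le> (\<Sum>m\<in>supp u. (alpha u x y (z - m) - alpha u x y z) * u m)"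
      proof (rule sum_mono)
        fix m assume m: "m \<in> supp u"
        have "\<bar>(alpha u x y (z - m) - alpha u x y z) * u m\<bar> \<le> alpha u x y z * E * \<bar>u m\<bar>"
          unfolding abs_mult using bnd[OF m] by (rule mult_right_mono) simp
        thus "- (alpha u x y z * E * \<bar>u m\<bar>) \<le> (alpha u x y (z - m) - alpha u x y z) * u m" by linarith
      qed
      thus ?thesis by (simp add: sum_negf)
    qed
    finally have "W u x y z - alpha u x y z * ub \<ge> - (alpha u x y z * E * N)"
      unfolding N_def ul1_def by (simp add: sum_distrib_left)
    moreover have "alpha u x y z * E * N = alpha u x y z * ub / 2" using Npos E_def by simp
    ultimately show ?thesis by (simp only: mult.assoc)
  qed
  have apos: "alpha u x y k > 0" unfolding alpha_def by (simp add: add_pos_pos)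
  have ax: "alpha u x y x \<ge> 1/2" unfolding alpha_def by (simp add: add_nonneg_nonneg)
  have ay: "alpha u x y y \<ge> 1/2" unfolding alpha_def by (simp add: add_nonneg_nonneg)
  have "alpha u x y x * ub / 2 \<ge> ub / 4" using ax ub_pos by (simp add: field_simps)
  moreover have "alpha u x y y * ub / 2 \<ge> ub / 4" using ay ub_pos by (simp add: field_simps)
  ultimately have "W u x y x \<ge> ub / 4" "W u x y y \<ge> ub / 4" using key[of x] key[of y] by linarith+
  moreover have "alpha u x y k * ub / 2 > 0" using apos ub_pos by simp
  ultimately show ?thesis using key[of k] unfolding ub_def by simp
qed

end
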